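(* Let $\chi:\mathcal H\to\mathcal H_L^\chi\otimes\mathcal H_R^\chi$ be a splitting map. The set $\mathrm{cons}(\chi)$ of $\chi$-consistent operators is a Von Neumann algebra included in $\mathcal L(\mathcal H_L^\chi)$, and it is the largest Von Neumann algebra $\mathcal A\subseteq\mathcal L(\mathcal H_L^\chi)$ such that the restriction of $\sigma^\chi$ to $\mathcal A$ is a $*$-algebra homomorphism, where $\sigma^\chi:\mathcal L(\mathcal H_L^\chi)\to\mathcal L(\mathcal H)$, $\sigma^\chi(B)=\chi^\dagger(B\otimes\mathbb 1_{\mathcal H_R^\chi})\chi$.
   Context: All Hilbert spaces are finite-dimensional and complex. A Von Neumann algebra on a Hilbert space $\mathcal K$ is a $*$-subalgebra of $\mathcal L(\mathcal K)$ closed under adjoint and containing $\mathbb 1_{\mathcal K}$. A splitting map on $\mathcal H$ is an isometry $\chi:\mathcal H\to\mathcal H_L^\chi\otimes\mathcal H_R^\chi$; $\pi^\chi=\chi\chi^\dagger$. $B\in\mathcal L(\mathcal H_L^\chi)$ is $\chi$-consistent if $\pi^\chi(B\otimes\mathbb 1)=(B\otimes\mathbb 1)\pi^\chi$. *)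

theory Defs
  imports "Jordan_Normal_Form.Schur_Decomposition"
begin

text \<open>Finite-dimensional Hilbert spaces are modelled as C^n; operators as complex matrices.
  The tensor product H_L (x) H_R = C^dL (x) C^dR is C^(dL*dR) with the Kronecker product
  of matrices.\<close>

definition kron :: "complex mat \<Rightarrow> complex mat \<Rightarrow> complex mat" where
  "kron A B = mat (dim_row A * dim_row B) (dim_col A * dim_col B)
     (\<lambda>(i, j). A $$ (i div dim_row B, j div dim_col B) * B $$ (i mod dim_row B, j mod dim_col B))"

definition splitting_map :: "complex mat \<Rightarrow> nat \<Rightarrow> nat \<Rightarrow> nat \<Rightarrow> bool" where
  "splitting_map chi n dL dR \<longleftrightarrow> chi \<in> carrier_mat (dL * dR) n \<and> mat_adjoint chi * chi = 1\<^sub>m n"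

definition proj_split :: "complex mat \<Rightarrow> complex mat" where
  "proj_split chi = chi * mat_adjoint chi"

definition cons :: "complex mat \<Rightarrow> nat \<Rightarrow> nat \<Rightarrow> complex mat set" where
  "cons chi dL dR = {B \<in> carrier_mat dL dL.
      proj_split chi * kron B (1\<^sub>m dR) = kron B (1\<^sub>m dR) * proj_split chi}"

definition sigma :: "complex mat \<Rightarrow> nat \<Rightarrow> complex mat \<Rightarrow> complex mat" where
  "sigma chi dR B = mat_adjoint chi * kron B (1\<^sub>m dR) * chi"

text \<open>Von Neumann algebra on C^d (finite dim): unital *-subalgebra of L(C^d).\<close>
definition von_neumann_algebra :: "nat \<Rightarrow> complex mat set \<Rightarrow> bool" where
  "von_neumann_algebra d A \<longleftrightarrow> A \<subseteq> carrier_mat d d \<and> 1\<^sub>m d \<in> A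
     \<and> (\<forall>B\<in>A. \<forall>C\<in>A. B + C \<in> A \<and> B * C \<in> A)
     \<and> (\<forall>c. \<forall>B\<in>A. c \<cdot>\<^sub>m B \<in> A)
     \<and> (\<forall>B\<in>A. mat_adjoint B \<in> A)"

definition star_hom_on :: "complex mat set \<Rightarrow> (complex mat \<Rightarrow> complex mat) \<Rightarrow> bool" where
  "star_hom_on A f \<longleftrightarrow>
     (\<forall>B\<in>A. \<forall>C\<in>A. f (B + C) = f B + f C \<and> f (B * C) = f B * f C)
     \<and> (\<forall>c. \<forall>B\<in>A. f (c \<cdot>\<^sub>m B) = c \<cdot>\<^sub>m f B)
     \<and> (\<forall>B\<in>A. f (mat_adjoint B) = mat_adjoint (f B))"

end

theory Submission
  imports Defs
begin


lemma adj_dim[simp]: "dim_row (mat_adjoint A) = dim_col A" "dim_col (mat_adjoint A) = dim_row A"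
  unfolding mat_adjoint_def by simp_all

lemma adj_carrier[simp]: "A \<in> carrier_mat m n \<Longrightarrow> mat_adjoint A \<in> carrier_mat n m"
  unfolding carrier_mat_def using adj_dim by auto

lemma adj_index[simp]: "i < dim_col A \<Longrightarrow> j < dim_row A \<Longrightarrow> mat_adjoint (A::complex mat) $$ (i,j) = cnj (A $$ (j,i))"
  unfolding mat_adjoint_def by (simp add: mat_of_rows_index)

lemma adj_adj[simp]: "mat_adjoint (mat_adjoint (A::complex mat)) = A"
  by (rule eq_matI) auto

lemma adj_mult: "(A::complex mat) \<in> carrier_mat m k \<Longrightarrow> B \<in> carrier_mat k p \<Longrightarrow>
   mat_adjoint (A * B) = mat_adjoint B * mat_adjoint A"
  by (rule eq_matI) (auto simp: scalar_prod_def row_def col_def mult.commute)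

lemma adj_add: "(A::complex mat) \<in> carrier_mat m k \<Longrightarrow> B \<in> carrier_mat m k \<Longrightarrow>
   mat_adjoint (A + B) = mat_adjoint A + mat_adjoint B"
  by (rule eq_matI) auto

lemma adj_smult: "mat_adjoint (c \<cdot>\<^sub>m (A::complex mat)) = cnj c \<cdot>\<^sub>m mat_adjoint A"
  by (rule eq_matI) auto

lemma adj_one[simp]: "mat_adjoint (1\<^sub>m n :: complex mat) = 1\<^sub>m n"
  by (rule eq_matI) auto

lemma adj_zero_imp: assumes "mat_adjoint (M::complex mat) * M = 0\<^sub>m (dim_col M) (dim_col M)"
  shows "M = 0\<^sub>m (dim_row M) (dim_col M)"
proof (rule eq_matI)
  fix i j assume i: "i < dim_row (0\<^sub>m (dim_row M) (dim_col M))" and j: "j < dim_col (0\<^sub>m (dim_row M) (dim_col M))"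
  have z1: "(mat_adjoint M * M) $$ (j,j) = 0" using assms j by simp
  have z2: "(mat_adjoint M * M) $$ (j,j) = conjugate (col M j) \<bullet> col M j"
    using j unfolding mat_adjoint_def by simp
  have "col M j = 0\<^sub>v (dim_row M)"
  proof -
    have cj: "col M j \<in> carrier_vec (dim_row M)" by (rule col_dim)
    have "col M j \<bullet>c col M j = conjugate (col M j) \<bullet> col M j"
      by (rule conjugate_vec_sprod_comm[OF cj cj])
    with z1 z2 have "col M j \<bullet>c col M j = 0" by simp
    then show ?thesis using conjugate_square_eq_0_vec[OF cj] by simp
  qed
  then have "col M j $ i = 0" using i by simp
  then show "M $$ (i,j) = 0\<^sub>m (dim_row M) (dim_col M) $$ (i,j)" using i j by simp
qed auto



lemma sum_split: "sum (g::nat\<Rightarrow>'a::comm_monoid_add) {..<l*k} = (\<Sum>a<l. \<Sum>b<k. g (a*k+b))"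
proof -
  have "sum g {..<l*k} = (\<Sum>a<l. sum g {a*k..<a*k+k})" by (rule sum.nat_group[symmetric])
  also have "\<dots> = (\<Sum>a<l. \<Sum>b<k. g (a*k+b))"
    by (rule sum.cong[OF refl], subst sum.atLeastLessThan_shift_0) (simp add: atLeast0LessThan comp_def)
  finally show ?thesis .
qed

lemma kron_dim[simp]: "dim_row (kron A B) = dim_row A * dim_row B" "dim_col (kron A B) = dim_col A * dim_col B"
  unfolding kron_def by auto

lemma kron_carrier: "B \<in> carrier_mat dL dL \<Longrightarrow> kron B (1\<^sub>m dR) \<in> carrier_mat (dL*dR) (dL*dR)"
  unfolding carrier_mat_def by simp

lemma kron_index: assumes "B \<in> carrier_mat dL dL" "i < dL*dR" "j < dL*dR"
  shows "kron B (1\<^sub>m dR) $$ (i,j) = (if i mod dR = j mod dR then B $$ (i div dR, j div dR) else 0)"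
proof -
  have dR: "dR > 0" using assms(2) by (cases dR) simp_all
  have m: "i mod dR < dR" "j mod dR < dR" using dR by simp_all
  have dims: "dim_row B = dL" "dim_col B = dL" using carrier_matD[OF assms(1)] by simp_all
  have "kron B (1\<^sub>m dR) $$ (i,j) = B $$ (i div dR, j div dR) * 1\<^sub>m dR $$ (i mod dR, j mod dR)"
    unfolding kron_def using assms(2,3) by (simp add: dims)
  then show ?thesis using m by simp
qed

lemma kron_eqI: assumes "A \<in> carrier_mat N N" "B \<in> carrier_mat N N" and
  "\<And>i j. i < N \<Longrightarrow> j < N \<Longrightarrow> A $$ (i,j) = B $$ (i,j)" shows "A = B"
proof (rule eq_matI)
  have d: "dim_row A = N" "dim_col A = N" "dim_row B = N" "dim_col B = N"
    using carrier_matD[OF assms(1)] carrier_matD[OF assms(2)] by simp_all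
  show "dim_row A = dim_row B" "dim_col A = dim_col B" unfolding d by simp_all
  fix i j assume "i < dim_row B" "j < dim_col B"
  then show "A $$ (i,j) = B $$ (i,j)" using assms(3) unfolding d by simp
qed

lemma kron_mult: assumes B: "B \<in> carrier_mat dL dL" and C: "C \<in> carrier_mat dL dL"
  shows "kron (B * C) (1\<^sub>m dR) = kron B (1\<^sub>m dR) * kron C (1\<^sub>m dR)"
proof (rule kron_eqI[of _ "dL*dR"])
  fix i j assume i: "i < dL*dR" and j: "j < dL*dR"
  have dR: "dR > 0" using i by (cases dR) simp_all
  have id: "i div dR < dL" "j div dR < dL" using i j by (simp_all add: less_mult_imp_div_less)
  have "(kron B (1\<^sub>m dR) * kron C (1\<^sub>m dR)) $$ (i,j) =
     (\<Sum>k<dL*dR. kron B (1\<^sub>m dR) $$ (i,k) * kron C (1\<^sub>m dR) $$ (k,j))"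
  proof -
    have dB: "dim_row (kron B (1\<^sub>m dR)) = dL*dR" and dC: "dim_col (kron C (1\<^sub>m dR)) = dL*dR"
      "dim_row (kron C (1\<^sub>m dR)) = dL*dR" "dim_col (kron B (1\<^sub>m dR)) = dL*dR"
      using carrier_matD[OF B] carrier_matD[OF C] by simp_all
    have "(kron B (1\<^sub>m dR) * kron C (1\<^sub>m dR)) $$ (i,j) = row (kron B (1\<^sub>m dR)) i \<bullet> col (kron C (1\<^sub>m dR)) j"
      by (rule index_mult_mat(1)) (simp_all only: dB dC i j)
    also have "\<dots> = (\<Sum>k\<in>{0..<dL*dR}. row (kron B (1\<^sub>m dR)) i $ k * col (kron C (1\<^sub>m dR)) j $ k)"
      unfolding scalar_prod_def by (simp only: dim_col dC)
    also have "\<dots> = (\<Sum>k<dL * dR. kron B (1\<^sub>m dR) $$ (i, k) * kron C (1\<^sub>m dR) $$ (k, j))"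
      unfolding atLeast0LessThan
    proof (rule sum.cong[OF refl])
      fix k assume "k \<in> {..<dL*dR}"
      then have k: "k < dL*dR" by simp
      show "row (kron B (1\<^sub>m dR)) i $ k * col (kron C (1\<^sub>m dR)) j $ k = kron B (1\<^sub>m dR) $$ (i, k) * kron C (1\<^sub>m dR) $$ (k, j)"
        using index_row(1)[of i "kron B (1\<^sub>m dR)" k] index_col[of k "kron C (1\<^sub>m dR)" j] i j k
        unfolding dB dC by simp
    qed
    finally show ?thesis .
  qed
  also have "\<dots> = (\<Sum>a<dL. \<Sum>b<dR. kron B (1\<^sub>m dR) $$ (i,a*dR+b) * kron C (1\<^sub>m dR) $$ (a*dR+b,j))"
    by (rule sum_split)
  also have "\<dots> = (\<Sum>a<dL. \<Sum>b<dR. (if i mod dR = b then B $$ (i div dR, a) else 0) * (if b = j mod dR then C $$ (a, j div dR) else 0))"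
  proof (rule sum.cong[OF refl], rule sum.cong[OF refl])
    fix a b assume a: "a \<in> {..<dL}" and b: "b \<in> {..<dR}"
    have k: "a*dR+b < dL*dR"
    proof -
      have "a*dR+b < a*dR + dR" using b by simp
      also have "\<dots> = (a+1)*dR" by simp
      also have "\<dots> \<le> dL*dR" using a by (intro mult_right_mono) simp_all
      finally show ?thesis .
    qed
    have hd: "(a*dR+b) div dR = a" "(a*dR+b) mod dR = b" using b dR by simp_all
    have e1: "kron B (1\<^sub>m dR) $$ (i,a*dR+b) = (if i mod dR = b then B $$ (i div dR, a) else 0)"
      using kron_index[OF B i k] unfolding hd .
    have e2: "kron C (1\<^sub>m dR) $$ (a*dR+b,j) = (if b = j mod dR then C $$ (a, j div dR) else 0)"
      using kron_index[OF C k j] unfolding hd .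
    show "kron B (1\<^sub>m dR) $$ (i,a*dR+b) * kron C (1\<^sub>m dR) $$ (a*dR+b,j) = (if i mod dR = b then B $$ (i div dR, a) else 0) * (if b = j mod dR then C $$ (a, j div dR) else 0)"
      unfolding e1 e2 ..
  qed
  also have "\<dots> = (\<Sum>a<dL. if i mod dR = j mod dR then B $$ (i div dR, a) * C $$ (a, j div dR) else 0)"
  proof (rule sum.cong[OF refl])
    fix a
    have "(\<Sum>b<dR. (if i mod dR = b then B $$ (i div dR, a) else 0) * (if b = j mod dR then C $$ (a, j div dR) else 0))
      = (\<Sum>b<dR. if b = i mod dR then (if i mod dR = j mod dR then B $$ (i div dR, a) * C $$ (a, j div dR) else 0) else 0)"
      by (rule sum.cong[OF refl]) (simp split: if_split)
    also have "\<dots> = (if i mod dR = j mod dR then B $$ (i div dR, a) * C $$ (a, j div dR) else 0)"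
      using dR by (simp add: sum.delta)
    finally show "(\<Sum>b<dR. (if i mod dR = b then B $$ (i div dR, a) else 0) * (if b = j mod dR then C $$ (a, j div dR) else 0)) = (if i mod dR = j mod dR then B $$ (i div dR, a) * C $$ (a, j div dR) else 0)" .
  qed
  also have "\<dots> = kron (B * C) (1\<^sub>m dR) $$ (i,j)"
  proof -
    have BC: "B * C \<in> carrier_mat dL dL" by (rule mult_carrier_mat[OF B C])
    have "(B * C) $$ (i div dR, j div dR) = (\<Sum>a<dL. B $$ (i div dR, a) * C $$ (a, j div dR))"
    proof -
      have d: "dim_row B = dL" "dim_col B = dL" "dim_row C = dL" "dim_col C = dL"
        using carrier_matD[OF B] carrier_matD[OF C] by simp_all
      have "(B * C) $$ (i div dR, j div dR) = row B (i div dR) \<bullet> col C (j div dR)"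
        by (rule index_mult_mat(1)) (simp_all only: d id)
      also have "\<dots> = (\<Sum>k\<in>{0..<dL}. row B (i div dR) $ k * col C (j div dR) $ k)"
        unfolding scalar_prod_def by (simp only: dim_col d)
      also have "\<dots> = (\<Sum>a<dL. B $$ (i div dR, a) * C $$ (a, j div dR))"
        unfolding atLeast0LessThan
      proof (rule sum.cong[OF refl])
        fix k assume "k \<in> {..<dL}"
        then have k: "k < dL" by simp
        show "row B (i div dR) $ k * col C (j div dR) $ k = B $$ (i div dR, k) * C $$ (k, j div dR)"
          using index_row(1)[of "i div dR" B k] index_col[of k C "j div dR"] id k
          unfolding d by simp
      qed
      finally show ?thesis .
    qed
    then show ?thesis unfolding kron_index[OF BC i j] by (simp add: if_distrib)
  qed
  finally show "kron (B * C) (1\<^sub>m dR) $$ (i,j) = (kron B (1\<^sub>m dR) * kron C (1\<^sub>m dR)) $$ (i,j)" by simp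
next
  show "kron (B * C) (1\<^sub>m dR) \<in> carrier_mat (dL*dR) (dL*dR)"
    by (rule kron_carrier, rule mult_carrier_mat[OF B C])
  show "kron B (1\<^sub>m dR) * kron C (1\<^sub>m dR) \<in> carrier_mat (dL*dR) (dL*dR)"
    by (rule mult_carrier_mat[OF kron_carrier[OF B, of dR] kron_carrier[OF C, of dR]])
qed

lemma kron_add: assumes B: "B \<in> carrier_mat dL dL" and C: "C \<in> carrier_mat dL dL"
  shows "kron (B + C) (1\<^sub>m dR) = kron B (1\<^sub>m dR) + kron C (1\<^sub>m dR)"
proof (rule kron_eqI[of _ "dL*dR"])
  fix i j assume i: "i < dL*dR" and j: "j < dL*dR"
  have id: "i div dR < dL" "j div dR < dL" using i j by (simp_all add: less_mult_imp_div_less)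
  have BC: "B + C \<in> carrier_mat dL dL" by (rule add_carrier_mat[OF C])
  have dk: "dim_row (kron C (1\<^sub>m dR)) = dL*dR" "dim_col (kron C (1\<^sub>m dR)) = dL*dR"
    using carrier_matD[OF kron_carrier[OF C, of dR]] by simp_all
  have d: "dim_row C = dL" "dim_col C = dL" using carrier_matD[OF C] by simp_all
  have e: "(kron B (1\<^sub>m dR) + kron C (1\<^sub>m dR)) $$ (i,j) = kron B (1\<^sub>m dR) $$ (i,j) + kron C (1\<^sub>m dR) $$ (i,j)"
    by (rule index_add_mat(1)) (simp_all only: dk i j)
  have e2: "(B + C) $$ (i div dR, j div dR) = B $$ (i div dR, j div dR) + C $$ (i div dR, j div dR)"
    by (rule index_add_mat(1)) (simp_all only: d id)
  show "kron (B + C) (1\<^sub>m dR) $$ (i,j) = (kron B (1\<^sub>m dR) + kron C (1\<^sub>m dR)) $$ (i,j)"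
    unfolding e kron_index[OF BC i j] kron_index[OF B i j] kron_index[OF C i j] e2 by simp
next
  show "kron (B + C) (1\<^sub>m dR) \<in> carrier_mat (dL*dR) (dL*dR)"
    by (rule kron_carrier, rule add_carrier_mat[OF C])
  show "kron B (1\<^sub>m dR) + kron C (1\<^sub>m dR) \<in> carrier_mat (dL*dR) (dL*dR)"
    by (rule add_carrier_mat[OF kron_carrier[OF C, of dR]])
qed

lemma kron_smult: assumes B: "B \<in> carrier_mat dL dL"
  shows "kron (c \<cdot>\<^sub>m B) (1\<^sub>m dR) = c \<cdot>\<^sub>m kron B (1\<^sub>m dR)"
proof (rule kron_eqI[of _ "dL*dR"])
  fix i j assume i: "i < dL*dR" and j: "j < dL*dR"
  have id: "i div dR < dL" "j div dR < dL" using i j by (simp_all add: less_mult_imp_div_less)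
  have BC: "c \<cdot>\<^sub>m B \<in> carrier_mat dL dL" by (rule smult_carrier_mat[OF B])
  have dk: "dim_row (kron B (1\<^sub>m dR)) = dL*dR" "dim_col (kron B (1\<^sub>m dR)) = dL*dR"
    using carrier_matD[OF kron_carrier[OF B, of dR]] by simp_all
  have d: "dim_row B = dL" "dim_col B = dL" using carrier_matD[OF B] by simp_all
  have e: "(c \<cdot>\<^sub>m kron B (1\<^sub>m dR)) $$ (i,j) = c * kron B (1\<^sub>m dR) $$ (i,j)"
    by (rule index_smult_mat(1)) (simp_all only: dk i j)
  have e2: "(c \<cdot>\<^sub>m B) $$ (i div dR, j div dR) = c * B $$ (i div dR, j div dR)"
    by (rule index_smult_mat(1)) (simp_all only: d id)
  show "kron (c \<cdot>\<^sub>m B) (1\<^sub>m dR) $$ (i,j) = (c \<cdot>\<^sub>m kron B (1\<^sub>m dR)) $$ (i,j)"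
    unfolding e kron_index[OF BC i j] kron_index[OF B i j] e2 by simp
next
  show "kron (c \<cdot>\<^sub>m B) (1\<^sub>m dR) \<in> carrier_mat (dL*dR) (dL*dR)"
    by (rule kron_carrier, rule smult_carrier_mat[OF B])
  show "c \<cdot>\<^sub>m kron B (1\<^sub>m dR) \<in> carrier_mat (dL*dR) (dL*dR)"
    by (rule smult_carrier_mat[OF kron_carrier[OF B, of dR]])
qed

lemma kron_adj: assumes B: "B \<in> carrier_mat dL dL"
  shows "kron (mat_adjoint B) (1\<^sub>m dR) = mat_adjoint (kron B (1\<^sub>m dR))"
proof (rule kron_eqI[of _ "dL*dR"])
  fix i j assume i: "i < dL*dR" and j: "j < dL*dR"
  have id: "i div dR < dL" "j div dR < dL" using i j by (simp_all add: less_mult_imp_div_less)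
  have BC: "mat_adjoint B \<in> carrier_mat dL dL" by (rule adj_carrier[OF B])
  have dk: "dim_row (kron B (1\<^sub>m dR)) = dL*dR" "dim_col (kron B (1\<^sub>m dR)) = dL*dR"
    using carrier_matD[OF kron_carrier[OF B, of dR]] by simp_all
  have d: "dim_row B = dL" "dim_col B = dL" using carrier_matD[OF B] by simp_all
  have e: "mat_adjoint (kron B (1\<^sub>m dR)) $$ (i,j) = cnj (kron B (1\<^sub>m dR) $$ (j,i))"
    by (rule adj_index) (simp_all only: dk i j)
  have e2: "mat_adjoint B $$ (i div dR, j div dR) = cnj (B $$ (j div dR, i div dR))"
    by (rule adj_index) (simp_all only: d id)
  show "kron (mat_adjoint B) (1\<^sub>m dR) $$ (i,j) = mat_adjoint (kron B (1\<^sub>m dR)) $$ (i,j)"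
    unfolding e kron_index[OF BC i j] kron_index[OF B j i] e2 by simp
next
  show "kron (mat_adjoint B) (1\<^sub>m dR) \<in> carrier_mat (dL*dR) (dL*dR)"
    by (rule kron_carrier, rule adj_carrier[OF B])
  show "mat_adjoint (kron B (1\<^sub>m dR)) \<in> carrier_mat (dL*dR) (dL*dR)"
    by (rule adj_carrier[OF kron_carrier[OF B, of dR]])
qed

lemma kron_one: "kron (1\<^sub>m dL) (1\<^sub>m dR) = (1\<^sub>m (dL*dR) :: complex mat)"
proof (rule kron_eqI[of _ "dL*dR"])
  fix i j assume i: "i < dL*dR" and j: "j < dL*dR"
  have id: "i div dR < dL" "j div dR < dL" using i j by (simp_all add: less_mult_imp_div_less)
  have iff: "(i = j) = (i div dR = j div dR \<and> i mod dR = j mod dR)"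
  proof
    assume "i div dR = j div dR \<and> i mod dR = j mod dR"
    then have "i div dR * dR + i mod dR = j div dR * dR + j mod dR" by simp
    then show "i = j" by (simp only: div_mult_mod_eq)
  qed simp
  have e1: "kron (1\<^sub>m dL) (1\<^sub>m dR) $$ (i, j) = (if i mod dR = j mod dR then (1\<^sub>m dL :: complex mat) $$ (i div dR, j div dR) else 0)"
    by (rule kron_index[OF one_carrier_mat i j])
  have e2: "(1\<^sub>m dL :: complex mat) $$ (i div dR, j div dR) = (if i div dR = j div dR then 1 else 0)"
    by (rule index_one_mat(1)[OF id])
  have e3: "(1\<^sub>m (dL*dR) :: complex mat) $$ (i,j) = (if i = j then 1 else 0)"
    by (rule index_one_mat(1)[OF i j])
  show "kron (1\<^sub>m dL) (1\<^sub>m dR) $$ (i, j) = (1\<^sub>m (dL*dR) :: complex mat) $$ (i,j)"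
    unfolding e1 e2 e3
  proof (cases "i = j")
    case True then show "(if i mod dR = j mod dR then if i div dR = j div dR then 1 else 0 else 0) = (if i = j then 1 else (0::complex))"
      by simp
  next
    case False
    then have "\<not> (i div dR = j div dR \<and> i mod dR = j mod dR)" using iff by blast
    then show "(if i mod dR = j mod dR then if i div dR = j div dR then 1 else 0 else 0) = (if i = j then 1 else (0::complex))"
      using False by (cases "i mod dR = j mod dR") simp_all
  qed
next
  show "kron (1\<^sub>m dL) (1\<^sub>m dR) \<in> carrier_mat (dL*dR) (dL*dR)"
    by (rule kron_carrier[OF one_carrier_mat])
  show "(1\<^sub>m (dL*dR) :: complex mat) \<in> carrier_mat (dL*dR) (dL*dR)"
    by (rule one_carrier_mat)
qed

lemma adj_minus: "(A::complex mat) \<in> carrier_mat m k \<Longrightarrow> B \<in> carrier_mat m k \<Longrightarrow>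
   mat_adjoint (A - B) = mat_adjoint A - mat_adjoint B"
  by (rule eq_matI) auto

lemma key_lemma:
  fixes X P :: "complex mat"
  assumes X: "X \<in> carrier_mat N n" and P: "P \<in> carrier_mat N N"
    and Padj: "mat_adjoint P = P" and PP: "P * P = P"
    and h: "mat_adjoint X * X = mat_adjoint X * (P * X)"
  shows "X = P * X"
proof -
  define M where "M = X - P * X"
  have PX: "P * X \<in> carrier_mat N n" by (rule mult_carrier_mat[OF P X])
  have M: "M \<in> carrier_mat N n" unfolding M_def by (rule minus_carrier_mat[OF PX])
  have aX: "mat_adjoint X \<in> carrier_mat n N" by (rule adj_carrier[OF X])
  have aXP: "mat_adjoint X * P \<in> carrier_mat n N" by (rule mult_carrier_mat[OF aX P])
  have aM: "mat_adjoint M = mat_adjoint X - mat_adjoint X * P"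
    unfolding M_def adj_minus[OF X PX] adj_mult[OF P X] Padj ..
  have s1: "mat_adjoint M * M = mat_adjoint X * M - mat_adjoint X * P * M"
    unfolding aM by (rule minus_mult_distrib_mat[OF aX aXP M])
  have s2: "mat_adjoint X * M = 0\<^sub>m n n"
  proof -
    have "mat_adjoint X * M = mat_adjoint X * X - mat_adjoint X * (P * X)"
      unfolding M_def by (rule mult_minus_distrib_mat[OF aX X PX])
    also have "\<dots> = 0\<^sub>m n n" unfolding h by (rule minus_r_inv_mat[OF mult_carrier_mat[OF aX PX]])
    finally show ?thesis .
  qed
  have s3: "mat_adjoint X * P * M = 0\<^sub>m n n"
  proof -
    have "mat_adjoint X * P * M = mat_adjoint X * P * X - mat_adjoint X * P * (P * X)"
      unfolding M_def by (rule mult_minus_distrib_mat[OF aXP X PX])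
    also have "mat_adjoint X * P * (P * X) = mat_adjoint X * P * X"
    proof -
      have "mat_adjoint X * P * (P * X) = mat_adjoint X * P * P * X"
        by (rule assoc_mult_mat[OF aXP P X, symmetric])
      also have "mat_adjoint X * P * P = mat_adjoint X * P"
        using assoc_mult_mat[OF aX P P] PP by simp
      finally show ?thesis .
    qed
    also have "mat_adjoint X * P * X - mat_adjoint X * P * X = 0\<^sub>m n n"
      by (rule minus_r_inv_mat[OF mult_carrier_mat[OF aXP X]])
    finally show ?thesis .
  qed
  have dM: "dim_col M = n" "dim_row M = N" using carrier_matD[OF M] by simp_all
  have "mat_adjoint M * M = 0\<^sub>m (dim_col M) (dim_col M)"
    unfolding s1 s2 s3 dM by (rule minus_r_inv_mat[OF zero_carrier_mat])
  from adj_zero_imp[OF this] have M0: "M = 0\<^sub>m N n" unfolding dM .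
  have dP: "dim_row P = N" "dim_col P = N" "dim_row X = N" "dim_col X = n"
    using carrier_matD[OF P] carrier_matD[OF X] by simp_all
  show ?thesis
  proof (rule eq_matI)
    fix i j assume i: "i < dim_row (P * X)" and j: "j < dim_col (P * X)"
    have i': "i < N" and j': "j < n" using i j unfolding index_mult_mat(2,3) dP .
    have "M $$ (i,j) = 0" unfolding M0 using i' j' by simp
    moreover have "M $$ (i,j) = X $$ (i,j) - (P * X) $$ (i,j)"
      unfolding M_def by (rule index_minus_mat(1)) (simp_all only: index_mult_mat(2,3) dP i' j')
    ultimately show "X $$ (i,j) = (P * X) $$ (i,j)" by simp
  next
    show "dim_row X = dim_row (P * X)" "dim_col X = dim_col (P * X)"
      unfolding index_mult_mat(2,3) dP by simp_all
  qed
qed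

lemma L2:
  fixes a c KB KC :: "complex mat"
  assumes a: "a \<in> carrier_mat n N" and c: "c \<in> carrier_mat N n" and KB: "KB \<in> carrier_mat N N"
   and KC: "KC \<in> carrier_mat N N" and h: "KB * (c * a) = (c * a) * KB" and iso: "a * c = 1\<^sub>m n"
  shows "(a * KB * c) * (a * KC * c) = a * (KB * KC) * c"
proof -
  have aKB: "a * KB \<in> carrier_mat n N" by (rule mult_carrier_mat[OF a KB])
  have X: "a * KB * c \<in> carrier_mat n n" by (rule mult_carrier_mat[OF aKB c])
  have aKC: "a * KC \<in> carrier_mat n N" by (rule mult_carrier_mat[OF a KC])
  have ca: "c * a \<in> carrier_mat N N" by (rule mult_carrier_mat[OF c a])
  have Xa: "a * KB * c * a \<in> carrier_mat n N" by (rule mult_carrier_mat[OF X a])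
  have "(a * KB * c) * (a * KC * c) = a * KB * c * (a * KC) * c"
    by (rule assoc_mult_mat[OF X aKC c, symmetric])
  also have "a * KB * c * (a * KC) = a * KB * c * a * KC"
    by (rule assoc_mult_mat[OF X a KC, symmetric])
  also have "a * KB * c * a = a * KB"
  proof -
    have "a * KB * c * a = a * KB * (c * a)" by (rule assoc_mult_mat[OF aKB c a])
    also have "\<dots> = a * (KB * (c * a))" by (rule assoc_mult_mat[OF a KB ca])
    also have "\<dots> = a * ((c * a) * KB)" unfolding h ..
    also have "\<dots> = a * (c * a) * KB" by (rule assoc_mult_mat[OF a ca KB, symmetric])
    also have "a * (c * a) = a * c * a" by (rule assoc_mult_mat[OF a c a, symmetric])
    also have "a * c * a = a" unfolding iso by (rule left_mult_one_mat[OF a])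
    finally show ?thesis .
  qed
  also have "a * KB * KC = a * (KB * KC)" by (rule assoc_mult_mat[OF a KB KC])
  finally show ?thesis .
qed

lemma L1:
  fixes P KB KC :: "complex mat"
  assumes P: "P \<in> carrier_mat N N" and KB: "KB \<in> carrier_mat N N"
   and KC: "KC \<in> carrier_mat N N" and hB: "P * KB = KB * P" and hC: "P * KC = KC * P"
  shows "P * (KB * KC) = (KB * KC) * P"
proof -
  have "P * (KB * KC) = P * KB * KC" by (rule assoc_mult_mat[OF P KB KC, symmetric])
  also have "\<dots> = KB * P * KC" unfolding hB ..
  also have "\<dots> = KB * (P * KC)" by (rule assoc_mult_mat[OF KB P KC])
  also have "\<dots> = KB * (KC * P)" unfolding hC ..
  also have "\<dots> = KB * KC * P" by (rule assoc_mult_mat[OF KB KC P, symmetric])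
  finally show ?thesis .
qed

lemma L3:
  fixes a c :: "complex mat"
  assumes a: "a \<in> carrier_mat n N" and c: "c \<in> carrier_mat N n" and iso: "a * c = 1\<^sub>m n"
  shows "(c * a) * (c * a) = c * a"
proof -
  have ca: "c * a \<in> carrier_mat N N" by (rule mult_carrier_mat[OF c a])
  have "(c * a) * (c * a) = c * a * c * a" by (rule assoc_mult_mat[OF ca c a, symmetric])
  also have "c * a * c = c * (a * c)" by (rule assoc_mult_mat[OF c a c])
  also have "\<dots> = c" unfolding iso by (rule right_mult_one_mat[OF c])
  finally show ?thesis .
qed

lemma L4:
  fixes c K :: "complex mat"
  assumes c: "c \<in> carrier_mat N n" and K: "K \<in> carrier_mat N N"
  shows "mat_adjoint (mat_adjoint c * K * c) = mat_adjoint c * mat_adjoint K * c"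
proof -
  have a: "mat_adjoint c \<in> carrier_mat n N" by (rule adj_carrier[OF c])
  have aK: "mat_adjoint c * K \<in> carrier_mat n N" by (rule mult_carrier_mat[OF a K])
  have aKa: "mat_adjoint K \<in> carrier_mat N N" by (rule adj_carrier[OF K])
  have "mat_adjoint (mat_adjoint c * K * c) = mat_adjoint c * mat_adjoint (mat_adjoint c * K)" by (rule adj_mult[OF aK c])
  also have "mat_adjoint (mat_adjoint c * K) = mat_adjoint K * c" unfolding adj_mult[OF a K] adj_adj ..
  also have "mat_adjoint c * (mat_adjoint K * c) = mat_adjoint c * mat_adjoint K * c"
    by (rule assoc_mult_mat[OF a aKa c, symmetric])
  finally show ?thesis .
qed

lemma L5:
  fixes c K :: "complex mat"
  assumes c: "c \<in> carrier_mat N n" and K: "K \<in> carrier_mat N N"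
    and h: "mat_adjoint c * (mat_adjoint K * K) * c = (mat_adjoint c * mat_adjoint K * c) * (mat_adjoint c * K * c)"
  shows "mat_adjoint (K * c) * (K * c) = mat_adjoint (K * c) * ((c * mat_adjoint c) * (K * c))"
proof -
  have a: "mat_adjoint c \<in> carrier_mat n N" by (rule adj_carrier[OF c])
  have aK: "mat_adjoint K \<in> carrier_mat N N" by (rule adj_carrier[OF K])
  have Y: "mat_adjoint c * mat_adjoint K \<in> carrier_mat n N" by (rule mult_carrier_mat[OF a aK])
  have Kc: "K * c \<in> carrier_mat N n" by (rule mult_carrier_mat[OF K c])
  have aKK: "mat_adjoint K * K \<in> carrier_mat N N" by (rule mult_carrier_mat[OF aK K])
  have aKc: "mat_adjoint c * K * c \<in> carrier_mat n n" by (rule mult_carrier_mat[OF mult_carrier_mat[OF a K] c])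
  have aKc': "mat_adjoint c * (K * c) \<in> carrier_mat n n" by (rule mult_carrier_mat[OF a Kc])
  have ca: "c * mat_adjoint c \<in> carrier_mat N N" by (rule mult_carrier_mat[OF c a])
  have aX: "mat_adjoint (K * c) = mat_adjoint c * mat_adjoint K" by (rule adj_mult[OF K c])
  have l: "mat_adjoint (K * c) * (K * c) = mat_adjoint c * (mat_adjoint K * K) * c"
  proof -
    have "mat_adjoint c * mat_adjoint K * (K * c) = mat_adjoint c * (mat_adjoint K * (K * c))"
      by (rule assoc_mult_mat[OF a aK Kc])
    also have "mat_adjoint K * (K * c) = mat_adjoint K * K * c" by (rule assoc_mult_mat[OF aK K c, symmetric])
    also have "mat_adjoint c * (mat_adjoint K * K * c) = mat_adjoint c * (mat_adjoint K * K) * c"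
      by (rule assoc_mult_mat[OF a aKK c, symmetric])
    finally show ?thesis unfolding aX .
  qed
  have q: "mat_adjoint c * K * c = mat_adjoint c * (K * c)" by (rule assoc_mult_mat[OF a K c])
  have r: "(mat_adjoint c * mat_adjoint K * c) * (mat_adjoint c * K * c) = mat_adjoint (K * c) * ((c * mat_adjoint c) * (K * c))"
  proof -
    have "(mat_adjoint c * mat_adjoint K * c) * (mat_adjoint c * (K * c)) = mat_adjoint c * mat_adjoint K * (c * (mat_adjoint c * (K * c)))"
      by (rule assoc_mult_mat[OF Y c aKc'])
    also have "c * (mat_adjoint c * (K * c)) = c * mat_adjoint c * (K * c)" by (rule assoc_mult_mat[OF c a Kc, symmetric])
    finally show ?thesis unfolding aX q .
  qed
  show ?thesis using h unfolding l r .
qed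

lemma L6:
  fixes c K :: "complex mat"
  assumes c: "c \<in> carrier_mat N n" and K: "K \<in> carrier_mat N N"
    and e: "K * c = (c * mat_adjoint c) * (K * c)"
  shows "K * (c * mat_adjoint c) = (c * mat_adjoint c) * K * (c * mat_adjoint c)"
proof -
  have a: "mat_adjoint c \<in> carrier_mat n N" by (rule adj_carrier[OF c])
  have ca: "c * mat_adjoint c \<in> carrier_mat N N" by (rule mult_carrier_mat[OF c a])
  have Kc: "K * c \<in> carrier_mat N n" by (rule mult_carrier_mat[OF K c])
  have "K * (c * mat_adjoint c) = K * c * mat_adjoint c" by (rule assoc_mult_mat[OF K c a, symmetric])
  also have "\<dots> = (c * mat_adjoint c) * (K * c) * mat_adjoint c" using e by simp
  also have "\<dots> = (c * mat_adjoint c) * (K * c * mat_adjoint c)" by (rule assoc_mult_mat[OF ca Kc a])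
  also have "K * c * mat_adjoint c = K * (c * mat_adjoint c)" by (rule assoc_mult_mat[OF K c a])
  also have "(c * mat_adjoint c) * (K * (c * mat_adjoint c)) = (c * mat_adjoint c) * K * (c * mat_adjoint c)"
    by (rule assoc_mult_mat[OF ca K ca, symmetric])
  finally show ?thesis .
qed

theorem mainTheorem7:
  fixes chi :: "complex mat" and n dL dR :: nat
  assumes "splitting_map chi n dL dR"
  shows "von_neumann_algebra dL (cons chi dL dR)
     \<and> star_hom_on (cons chi dL dR) (sigma chi dR)
     \<and> (\<forall>A. von_neumann_algebra dL A \<and> star_hom_on A (sigma chi dR) \<longrightarrow> A \<subseteq> cons chi dL dR)"
proof -
  define N where "N = dL * dR"
  define P where "P = proj_split chi"
  define K where "K = (\<lambda>B. kron B (1\<^sub>m dR))"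
  have chi: "chi \<in> carrier_mat N n" and iso: "mat_adjoint chi * chi = 1\<^sub>m n"
    using assms unfolding splitting_map_def N_def by blast+
  have achi: "mat_adjoint chi \<in> carrier_mat n N" by (rule adj_carrier[OF chi])
  have Pdef: "P = chi * mat_adjoint chi" unfolding P_def proj_split_def ..
  have P: "P \<in> carrier_mat N N" unfolding Pdef by (rule mult_carrier_mat[OF chi achi])
  have Padj: "mat_adjoint P = P" unfolding Pdef adj_mult[OF chi achi] adj_adj ..
  have PP: "P * P = P" unfolding Pdef by (rule L3[OF achi chi iso])
  have K: "\<And>B. B \<in> carrier_mat dL dL \<Longrightarrow> K B \<in> carrier_mat N N"
    unfolding K_def N_def by (rule kron_carrier)
  have Kadj: "\<And>B. B \<in> carrier_mat dL dL \<Longrightarrow> K (mat_adjoint B) = mat_adjoint (K B)"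
    unfolding K_def by (rule kron_adj)
  have Kmult: "\<And>B C. B \<in> carrier_mat dL dL \<Longrightarrow> C \<in> carrier_mat dL dL \<Longrightarrow> K (B * C) = K B * K C"
    unfolding K_def by (rule kron_mult)
  have Kadd: "\<And>B C. B \<in> carrier_mat dL dL \<Longrightarrow> C \<in> carrier_mat dL dL \<Longrightarrow> K (B + C) = K B + K C"
    unfolding K_def by (rule kron_add)
  have Ksmult: "\<And>c B. B \<in> carrier_mat dL dL \<Longrightarrow> K (c \<cdot>\<^sub>m B) = c \<cdot>\<^sub>m K B"
    unfolding K_def by (rule kron_smult)
  have Kone: "K (1\<^sub>m dL) = 1\<^sub>m N" unfolding K_def N_def by (rule kron_one)
  have consI: "\<And>B. (B \<in> cons chi dL dR) = (B \<in> carrier_mat dL dL \<and> P * K B = K B * P)"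
    unfolding cons_def P_def K_def by simp
  have sig: "\<And>B. sigma chi dR B = mat_adjoint chi * K B * chi"
    unfolding sigma_def K_def ..
  have c1: "cons chi dL dR \<subseteq> carrier_mat dL dL" using consI by blast
  have c2: "1\<^sub>m dL \<in> cons chi dL dR"
    unfolding consI Kone right_mult_one_mat[OF P] left_mult_one_mat[OF P] by simp
  have c3: "B + C \<in> cons chi dL dR \<and> B * C \<in> cons chi dL dR"
    if B: "B \<in> cons chi dL dR" and C: "C \<in> cons chi dL dR" for B C
  proof -
    have Bc: "B \<in> carrier_mat dL dL" and Cc: "C \<in> carrier_mat dL dL" and
      hB: "P * K B = K B * P" and hC: "P * K C = K C * P" using B C unfolding consI by blast+
    have KB: "K B \<in> carrier_mat N N" by (rule K[OF Bc])
    have KC: "K C \<in> carrier_mat N N" by (rule K[OF Cc])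
    have "P * K (B + C) = K (B + C) * P"
      unfolding Kadd[OF Bc Cc] mult_add_distrib_mat[OF P KB KC] add_mult_distrib_mat[OF KB KC P] hB hC ..
    moreover have "P * K (B * C) = K (B * C) * P"
      unfolding Kmult[OF Bc Cc] by (rule L1[OF P KB KC hB hC])
    moreover have "B + C \<in> carrier_mat dL dL" by (rule add_carrier_mat[OF Cc])
    moreover have "B * C \<in> carrier_mat dL dL" by (rule mult_carrier_mat[OF Bc Cc])
    ultimately show ?thesis unfolding consI by blast
  qed
  have c4: "c \<cdot>\<^sub>m B \<in> cons chi dL dR" if B: "B \<in> cons chi dL dR" for c B
  proof -
    have Bc: "B \<in> carrier_mat dL dL" and hB: "P * K B = K B * P" using B unfolding consI by blast+
    have KB: "K B \<in> carrier_mat N N" by (rule K[OF Bc])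
    have "P * K (c \<cdot>\<^sub>m B) = K (c \<cdot>\<^sub>m B) * P"
      unfolding Ksmult[OF Bc] mult_smult_distrib[OF P KB] mult_smult_assoc_mat[OF KB P] hB ..
    moreover have "c \<cdot>\<^sub>m B \<in> carrier_mat dL dL" by (rule smult_carrier_mat[OF Bc])
    ultimately show ?thesis unfolding consI by blast
  qed
  have c5: "mat_adjoint B \<in> cons chi dL dR" if B: "B \<in> cons chi dL dR" for B
  proof -
    have Bc: "B \<in> carrier_mat dL dL" and hB: "P * K B = K B * P" using B unfolding consI by blast+
    have KB: "K B \<in> carrier_mat N N" by (rule K[OF Bc])
    have "mat_adjoint (K B * P) = P * mat_adjoint (K B)"
      unfolding adj_mult[OF KB P] Padj ..
    moreover have "mat_adjoint (P * K B) = mat_adjoint (K B) * P"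
      unfolding adj_mult[OF P KB] Padj ..
    ultimately have "P * K (mat_adjoint B) = K (mat_adjoint B) * P"
      unfolding Kadj[OF Bc] using hB by metis
    moreover have "mat_adjoint B \<in> carrier_mat dL dL" by (rule adj_carrier[OF Bc])
    ultimately show ?thesis unfolding consI by blast
  qed
  have vN: "von_neumann_algebra dL (cons chi dL dR)"
    unfolding von_neumann_algebra_def using c1 c2 c3 c4 c5 by blast
  have sig_add: "sigma chi dR (B + C) = sigma chi dR B + sigma chi dR C"
    if Bc: "B \<in> carrier_mat dL dL" and Cc: "C \<in> carrier_mat dL dL" for B C
  proof -
    have KB: "K B \<in> carrier_mat N N" by (rule K[OF Bc])
    have KC: "K C \<in> carrier_mat N N" by (rule K[OF Cc])
    show ?thesis unfolding sig Kadd[OF Bc Cc] mult_add_distrib_mat[OF achi KB KC]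
      add_mult_distrib_mat[OF mult_carrier_mat[OF achi KB] mult_carrier_mat[OF achi KC] chi] ..
  qed
  have sig_smult: "sigma chi dR (c \<cdot>\<^sub>m B) = c \<cdot>\<^sub>m sigma chi dR B"
    if Bc: "B \<in> carrier_mat dL dL" for c B
  proof -
    have KB: "K B \<in> carrier_mat N N" by (rule K[OF Bc])
    show ?thesis unfolding sig Ksmult[OF Bc] mult_smult_distrib[OF achi KB]
      mult_smult_assoc_mat[OF mult_carrier_mat[OF achi KB] chi] ..
  qed
  have sig_adj: "sigma chi dR (mat_adjoint B) = mat_adjoint (sigma chi dR B)"
    if Bc: "B \<in> carrier_mat dL dL" for B
    unfolding sig Kadj[OF Bc] L4[OF chi K[OF Bc]] ..
  have sig_mult: "sigma chi dR (B * C) = sigma chi dR B * sigma chi dR C"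
    if Bc: "B \<in> carrier_mat dL dL" and Cc: "C \<in> carrier_mat dL dL" and hB: "P * K B = K B * P" for B C
  proof -
    have h': "K B * (chi * mat_adjoint chi) = (chi * mat_adjoint chi) * K B" using hB unfolding Pdef by simp
    show ?thesis unfolding sig Kmult[OF Bc Cc]
      by (rule L2[OF achi chi K[OF Bc] K[OF Cc] h' iso, symmetric])
  qed
  have hom: "star_hom_on (cons chi dL dR) (sigma chi dR)"
    unfolding star_hom_on_def
  proof (intro conjI ballI allI)
    fix B C assume B: "B \<in> cons chi dL dR" and C: "C \<in> cons chi dL dR"
    have Bc: "B \<in> carrier_mat dL dL" and hB: "P * K B = K B * P" and Cc: "C \<in> carrier_mat dL dL"
      using B C unfolding consI by blast+
    show "sigma chi dR (B + C) = sigma chi dR B + sigma chi dR C" by (rule sig_add[OF Bc Cc])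
    show "sigma chi dR (B * C) = sigma chi dR B * sigma chi dR C" by (rule sig_mult[OF Bc Cc hB])
  next
    fix c B assume B: "B \<in> cons chi dL dR"
    have Bc: "B \<in> carrier_mat dL dL" using B unfolding consI by blast
    show "sigma chi dR (c \<cdot>\<^sub>m B) = c \<cdot>\<^sub>m sigma chi dR B" by (rule sig_smult[OF Bc])
  next
    fix B assume B: "B \<in> cons chi dL dR"
    have Bc: "B \<in> carrier_mat dL dL" using B unfolding consI by blast
    show "sigma chi dR (mat_adjoint B) = mat_adjoint (sigma chi dR B)" by (rule sig_adj[OF Bc])
  qed
  have keyB: "K B * P = P * K B * P"
    if Bc: "B \<in> carrier_mat dL dL"
      and h: "sigma chi dR (mat_adjoint B * B) = mat_adjoint (sigma chi dR B) * sigma chi dR B" for B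
  proof -
    have KB: "K B \<in> carrier_mat N N" by (rule K[OF Bc])
    have X: "K B * chi \<in> carrier_mat N n" by (rule mult_carrier_mat[OF KB chi])
    have h2: "mat_adjoint chi * (mat_adjoint (K B) * K B) * chi = (mat_adjoint chi * mat_adjoint (K B) * chi) * (mat_adjoint chi * K B * chi)"
      using h unfolding sig Kmult[OF adj_carrier[OF Bc] Bc] Kadj[OF Bc] L4[OF chi KB] .
    have e: "K B * chi = P * (K B * chi)"
      by (rule key_lemma[OF X P Padj PP L5[OF chi KB h2, folded Pdef]])
    show ?thesis using L6[OF chi KB e[unfolded Pdef]] unfolding Pdef .
  qed
  have maxi: "\<forall>A. von_neumann_algebra dL A \<and> star_hom_on A (sigma chi dR) \<longrightarrow> A \<subseteq> cons chi dL dR"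
  proof (intro allI impI subsetI)
    fix A B assume hA: "von_neumann_algebra dL A \<and> star_hom_on A (sigma chi dR)" and B: "B \<in> A"
    have AC: "A \<subseteq> carrier_mat dL dL" and aB: "mat_adjoint B \<in> A"
      using hA B unfolding von_neumann_algebra_def by blast+
    have Bc: "B \<in> carrier_mat dL dL" using AC B by blast
    have mul: "\<And>X Y. X \<in> A \<Longrightarrow> Y \<in> A \<Longrightarrow> sigma chi dR (X * Y) = sigma chi dR X * sigma chi dR Y"
      and adj: "\<And>X. X \<in> A \<Longrightarrow> sigma chi dR (mat_adjoint X) = mat_adjoint (sigma chi dR X)"
      using hA unfolding star_hom_on_def by blast+
    have KB: "K B \<in> carrier_mat N N" by (rule K[OF Bc])
    have aKB: "mat_adjoint (K B) \<in> carrier_mat N N" by (rule adj_carrier[OF KB])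
    have e1: "K B * P = P * K B * P"
      by (rule keyB[OF Bc]) (simp only: mul[OF aB B] adj[OF B])
    have e2': "sigma chi dR (mat_adjoint (mat_adjoint B) * mat_adjoint B) = mat_adjoint (sigma chi dR (mat_adjoint B)) * sigma chi dR (mat_adjoint B)"
      unfolding adj_adj mul[OF B aB] adj[OF B] adj[OF aB] adj_adj ..
    have e2: "K (mat_adjoint B) * P = P * K (mat_adjoint B) * P"
      by (rule keyB[OF adj_carrier[OF Bc] e2'])
    have KaB: "K (mat_adjoint B) = mat_adjoint (K B)" by (rule Kadj[OF Bc])
    have f1: "mat_adjoint (K (mat_adjoint B) * P) = P * K B"
      unfolding KaB adj_mult[OF aKB P] Padj adj_adj ..
    have f2: "mat_adjoint (P * K (mat_adjoint B) * P) = P * K B * P"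
      unfolding KaB adj_mult[OF mult_carrier_mat[OF P aKB] P] adj_mult[OF P aKB] Padj adj_adj
      by (rule assoc_mult_mat[OF P KB P, symmetric])
    have "P * K B = P * K B * P" using f1 f2 e2 by metis
    then have "P * K B = K B * P" using e1 by simp
    then show "B \<in> cons chi dL dR" unfolding consI using Bc by blast
  qed
  show ?thesis using vN hom maxi by blast
qed

end
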